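(* Let $G$ be a finite, connected, simple, bridgeless, triangle-free cubic graph. Then the reduced order two line graph $\mathfrak{L}_2(G)$ is $4$-regular and connected.
   Context: For a simple graph $H$, the line graph $\mathcal{L}(H)$ has the edges of $H$ as vertices, two of them adjacent iff they share an endpoint. For every triangle $T$ (3-cycle) of $\mathcal{L}(G)$, its three edges are pairwise adjacent in $\mathcal{L}(\mathcal{L}(G))$ and form a triangle $\mathcal{L}(T)$ there; let $\mathcal{T}$ be the set of all triangles $\mathcal{L}(T)$, $T$ ranging over triangles of $\mathcal{L}(G)$. The reduced order two line graph $\mathfrak{L}_2(G)$ is the graph with the same vertex set as $\mathcal{L}(\mathcal{L}(G))$ and whose edges are the edges of $\mathcal{L}(\mathcal{L}(G))$ not belonging to any triangle in $\mathcal{T}$. *)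

theory Defs
  imports Main
begin

definition simple_graph :: "'a set \<Rightarrow> 'a set set \<Rightarrow> bool" where
  "simple_graph V E \<longleftrightarrow> finite V \<and> (\<forall>e\<in>E. e \<subseteq> V \<and> card e = 2)"

definition degree :: "'a set set \<Rightarrow> 'a \<Rightarrow> nat" where
  "degree E v = card {e \<in> E. v \<in> e}"

definition regular :: "nat \<Rightarrow> 'a set \<Rightarrow> 'a set set \<Rightarrow> bool" where
  "regular k V E \<longleftrightarrow> (\<forall>v\<in>V. degree E v = k)"

definition adj :: "'a set set \<Rightarrow> 'a \<Rightarrow> 'a \<Rightarrow> bool" where
  "adj E u v \<longleftrightarrow> {u, v} \<in> E"

definition reachable :: "'a set set \<Rightarrow> 'a \<Rightarrow> 'a \<Rightarrow> bool" where
  "reachable E u v \<longleftrightarrow> (adj E)\<^sup>*\<^sup>* u v"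

definition connected_graph :: "'a set \<Rightarrow> 'a set set \<Rightarrow> bool" where
  "connected_graph V E \<longleftrightarrow> V \<noteq> {} \<and> (\<forall>u\<in>V. \<forall>v\<in>V. reachable E u v)"

definition is_bridge :: "'a set \<Rightarrow> 'a set set \<Rightarrow> 'a set \<Rightarrow> bool" where
  "is_bridge V E e \<longleftrightarrow> e \<in> E \<and>
     (\<exists>u\<in>V. \<exists>v\<in>V. reachable E u v \<and> \<not> reachable (E - {e}) u v)"

definition bridgeless :: "'a set \<Rightarrow> 'a set set \<Rightarrow> bool" where
  "bridgeless V E \<longleftrightarrow> (\<forall>e. \<not> is_bridge V E e)"

definition triangles :: "'a set set \<Rightarrow> 'a set set" where
  "triangles E = {{a, b, c} | a b c. a \<noteq> b \<and> b \<noteq> c \<and> a \<noteq> c \<and>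
                     {a, b} \<in> E \<and> {b, c} \<in> E \<and> {a, c} \<in> E}"

definition triangle_free :: "'a set set \<Rightarrow> bool" where
  "triangle_free E \<longleftrightarrow> triangles E = {}"

definition line_edges :: "'a set set \<Rightarrow> 'a set set set" where
  "line_edges E = {{e, f} | e f. e \<in> E \<and> f \<in> E \<and> e \<noteq> f \<and> e \<inter> f \<noteq> {}}"

definition set_edges :: "'a set \<Rightarrow> 'a set set" where
  "set_edges S = {{x, y} | x y. x \<in> S \<and> y \<in> S \<and> x \<noteq> y}"

text \<open>For a triangle T of L(G), the triangle L(T) in L(L(G)) has vertex set the
  three edges of T, hence edge set set_edges (set_edges T).\<close>
definition reduced_L2_vertices :: "'a set set \<Rightarrow> 'a set set set" where
  "reduced_L2_vertices E = line_edges E"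

definition reduced_L2_edges :: "'a set set \<Rightarrow> 'a set set set set" where
  "reduced_L2_edges E = line_edges (line_edges E) -
     (\<Union>T\<in>triangles (line_edges E). set_edges (set_edges T))"

end

theory Submission imports Defs begin

lemma le_mem: "{a,b} \<in> line_edges X \<Longrightarrow> a \<in> X \<and> b \<in> X"
  by (auto simp: line_edges_def doubleton_eq_iff)

lemma le_int: "{a,b} \<in> line_edges X \<Longrightarrow> a \<noteq> b \<Longrightarrow> a \<inter> b \<noteq> {}"
  by (auto simp: line_edges_def doubleton_eq_iff)

lemma q_form: "q \<in> line_edges X \<Longrightarrow> p \<in> q \<Longrightarrow> \<exists>p'. q = {p,p'} \<and> p' \<noteq> p \<and> p \<inter> p' \<noteq> {} \<and> p' \<in> X \<and> p \<in> X"
  unfolding line_edges_def by (auto simp: insert_commute Int_commute)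

lemma le_intro: "a \<in> X \<Longrightarrow> b \<in> X \<Longrightarrow> a \<noteq> b \<Longrightarrow> a \<inter> b \<noteq> {} \<Longrightarrow> {a,b} \<in> line_edges X"
  unfolding line_edges_def by blast

lemma se_intro: "x \<in> S \<Longrightarrow> y \<in> S \<Longrightarrow> x \<noteq> y \<Longrightarrow> {x,y} \<in> set_edges S"
  unfolding set_edges_def by blast

lemma tri_intro: "a \<noteq> b \<Longrightarrow> b \<noteq> c \<Longrightarrow> a \<noteq> c \<Longrightarrow> {a,b} \<in> X \<Longrightarrow> {b,c} \<in> X \<Longrightarrow> {a,c} \<in> X \<Longrightarrow> {a,b,c} \<in> triangles X"
  unfolding triangles_def by blast

lemma se_mem: "S \<in> set_edges T \<Longrightarrow> x \<in> S \<Longrightarrow> x \<in> T"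
  by (auto simp: set_edges_def)

lemma tri_LE: "T \<in> triangles (line_edges X) \<Longrightarrow> x \<in> T \<Longrightarrow> y \<in> T \<Longrightarrow> x \<noteq> y \<Longrightarrow> x \<inter> y \<noteq> {}"
proof -
  assume "T \<in> triangles (line_edges X)" "x \<in> T" "y \<in> T" "x \<noteq> y"
  then obtain a b c where T: "T = {a,b,c}" "a \<noteq> b" "b \<noteq> c" "a \<noteq> c"
    "{a,b} \<in> line_edges X" "{b,c} \<in> line_edges X" "{a,c} \<in> line_edges X"
    unfolding triangles_def by blast
  then have "a \<inter> b \<noteq> {}" "b \<inter> c \<noteq> {}" "a \<inter> c \<noteq> {}" using le_int by blast+
  then show ?thesis using T \<open>x \<in> T\<close> \<open>y \<in> T\<close> \<open>x \<noteq> y\<close> by (auto simp: Int_commute)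
qed

locale tfc =
  fixes V :: "'a set" and E :: "'a set set"
  assumes sg: "simple_graph V E" and tf: "triangle_free E" and reg: "regular 3 V E"
begin

lemma edge: "e \<in> E \<Longrightarrow> e \<subseteq> V \<and> card e = 2"
  using sg by (auto simp: simple_graph_def)

lemma edge_other: assumes "e \<in> E" "a \<in> e" obtains b where "b \<noteq> a" "e = {a,b}"
proof -
  from edge[OF assms(1)] obtain x y where "x \<noteq> y" "e = {x,y}" by (auto simp: card_2_iff)
  then show ?thesis using that assms(2)
    by (metis insert_commute insertE singletonD)
qed

lemma edge_eq: "g \<in> E \<Longrightarrow> a \<in> g \<Longrightarrow> b \<in> g \<Longrightarrow> a \<noteq> b \<Longrightarrow> g = {a,b}"
  using edge[of g] by (auto simp: card_2_iff)

lemma edge_ne: "e \<in> E \<Longrightarrow> e \<noteq> {}"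
  using edge[of e] by auto

lemma no_tri: "{a,b} \<in> E \<Longrightarrow> {b,c} \<in> E \<Longrightarrow> {a,c} \<in> E \<Longrightarrow> a \<noteq> b \<Longrightarrow> b \<noteq> c \<Longrightarrow> a \<noteq> c \<Longrightarrow> False"
  using tf unfolding triangle_free_def triangles_def by blast

lemma star3: "v \<in> V \<Longrightarrow> card {g \<in> E. v \<in> g} = 3"
  using reg by (simp add: regular_def degree_def)

lemma star_fin: "v \<in> V \<Longrightarrow> finite {g \<in> E. v \<in> g}"
proof -
  assume "v \<in> V"
  then have "card {g \<in> E. v \<in> g} > 0" using star3 by simp
  then show ?thesis by (rule card_ge_0_finite)
qed

lemma star_other: assumes "v \<in> V" shows "\<exists>g\<in>E. v \<in> g \<and> g \<noteq> f"
proof (rule ccontr)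
  assume "\<not> ?thesis"
  then have "{g \<in> E. v \<in> g} \<subseteq> {f}" by auto
  have "finite {f}" by simp
  from card_mono[OF this \<open>{g \<in> E. v \<in> g} \<subseteq> {f}\<close>]
  have "card {g \<in> E. v \<in> g} \<le> card {f}" .
  then show False using star3[OF assms] by simp
qed

lemma star_three: assumes "v \<in> V" "a \<in> E" "b \<in> E" "c \<in> E" "d \<in> E"
  "v \<in> a" "v \<in> b" "v \<in> c" "v \<in> d" "a \<noteq> b" "c \<notin> {a,b}" "d \<notin> {a,b}" shows "c = d"
proof (rule ccontr)
  assume "c \<noteq> d"
  then have "card {a,b,c,d} = 4" using assms by (auto simp: card_insert_if)
  moreover have "card {a,b,c,d} \<le> 3"
    using card_mono[OF star_fin[OF assms(1)], of "{a,b,c,d}"] star3[OF assms(1)] assms by auto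
  ultimately show False by simp
qed

lemma tf_disj: assumes "e \<in> E" "f \<in> E" "h \<in> E" "x \<in> e" "x \<in> f" "y \<in> f" "y \<in> h" "x \<noteq> y" "x \<notin> h" "y \<notin> e"
  shows "e \<inter> h = {}"
proof (rule ccontr)
  assume "e \<inter> h \<noteq> {}"
  then obtain t where t: "t \<in> e" "t \<in> h" by auto
  obtain u where u: "u \<noteq> x" "e = {x,u}" using edge_other assms by metis
  have "t = u" using t u assms by auto
  have "u \<noteq> y" using u assms by auto
  have "h = {y,u}" using edge_eq[of h y u] assms t \<open>t = u\<close> \<open>u \<noteq> y\<close> by auto
  have "f = {x,y}" using edge_eq assms by auto
  have "{x,y} \<in> E" "{y,u} \<in> E" "{x,u} \<in> E" using assms u \<open>h = {y,u}\<close> \<open>f = {x,y}\<close> by simp_all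
  from no_tri[OF this \<open>x \<noteq> y\<close> \<open>u \<noteq> y\<close>[symmetric]] u(1) show False by simp
qed

lemma in_R: assumes "e \<in> E" "f \<in> E" "g \<in> E" "e \<noteq> f" "f \<noteq> g" "e \<inter> f \<noteq> {}" "f \<inter> g \<noteq> {}" "e \<inter> g = {}"
  shows "{{e,f},{f,g}} \<in> reduced_L2_edges E"
proof -
  have "e \<noteq> g" using assms(1,8) edge_ne by auto
  have A: "{e,f} \<in> line_edges E" "{f,g} \<in> line_edges E"
    using le_intro[OF assms(1,2,4,6)] le_intro[OF assms(2,3,5,7)] by auto
  have ne: "{e,f} \<noteq> {f,g}" using \<open>e \<noteq> g\<close> assms(4) by (simp add: doubleton_eq_iff)
  have ne2: "{e,f} \<inter> {f,g} \<noteq> {}" by simp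
  have B: "{{e,f},{f,g}} \<in> line_edges (line_edges E)"
    by (rule le_intro[OF A ne ne2])
  have C: False if "T \<in> triangles (line_edges E)" "{{e,f},{f,g}} \<in> set_edges (set_edges T)" for T
  proof -
    have "{e,f} \<in> set_edges T" "{f,g} \<in> set_edges T" using se_mem[OF that(2)] by auto
    then have "e \<in> T" "g \<in> T" using se_mem[of "{e,f}" T e] se_mem[of "{f,g}" T g] by simp_all
    from tri_LE[OF that(1) this \<open>e \<noteq> g\<close>] assms(8) show False by simp
  qed
  show ?thesis unfolding reduced_L2_edges_def using B C by blast
qed

lemma removed: assumes "e \<in> E" "f \<in> E" "g \<in> E" "e \<noteq> f" "f \<noteq> g" "e \<noteq> g" "x \<in> e" "x \<in> f" "x \<in> g"
  shows "{{e,f},{f,g}} \<notin> reduced_L2_edges E"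
proof -
  have i1: "e \<inter> f \<noteq> {}" "f \<inter> g \<noteq> {}" "e \<inter> g \<noteq> {}" using assms(7,8,9) by blast+
  have L: "{e,f} \<in> line_edges E" "{f,g} \<in> line_edges E" "{e,g} \<in> line_edges E"
    using le_intro[OF assms(1,2,4) i1(1)] le_intro[OF assms(2,3,5) i1(2)] le_intro[OF assms(1,3,6) i1(3)] by auto
  have T: "{e,f,g} \<in> triangles (line_edges E)"
    by (rule tri_intro[OF assms(4,5,6) L])
  have S: "{e,f} \<in> set_edges {e,f,g}" "{f,g} \<in> set_edges {e,f,g}"
    using se_intro[of e "{e,f,g}" f] se_intro[of f "{e,f,g}" g] assms(4,5) by auto
  have ne: "{e,f} \<noteq> {f,g}" using assms(4,6) by (simp add: doubleton_eq_iff)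
  have "{{e,f},{f,g}} \<in> set_edges (set_edges {e,f,g})"
    using se_intro[OF S ne] .
  then show ?thesis unfolding reduced_L2_edges_def using T by blast
qed

lemma nb: assumes "e \<in> E" "f \<in> E" "e = {v,u}" "f = {v,w}" "u \<noteq> v" "w \<noteq> v" "u \<noteq> w"
  "{{e,f},p'} \<in> reduced_L2_edges E" "f \<in> p'" "p' \<noteq> {e,f}"
  shows "\<exists>g. g \<in> E \<and> w \<in> g \<and> g \<noteq> f \<and> p' = {f,g}"
proof -
  have "{{e,f},p'} \<in> line_edges (line_edges E)" using assms(8) unfolding reduced_L2_edges_def by blast
  then have "p' \<in> line_edges E" using le_mem by blast
  then obtain a b where ab: "p' = {a,b}" "a \<in> E" "b \<in> E" "a \<noteq> b" "a \<inter> b \<noteq> {}"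
    unfolding line_edges_def by blast
  obtain g where g: "p' = {f,g}" "g \<in> E" "g \<noteq> f" "g \<inter> f \<noteq> {}"
  proof (cases "f = a")
    case True
    then show ?thesis using that[of b] ab by blast
  next
    case False
    then have "f = b" using ab(1) assms(9) by blast
    then show ?thesis using that[of a] ab by (simp add: insert_commute Int_commute)
  qed
  have "e \<noteq> f" using assms(3,4,7) by (simp add: doubleton_eq_iff)
  have "g \<noteq> e"
  proof
    assume "g = e"
    then have "p' = {e,f}" using g(1) by (simp add: insert_commute)
    then show False using assms(10) by simp
  qed
  have "v \<notin> g"
  proof
    assume "v \<in> g"
    have "v \<in> e" "v \<in> f" using assms(3,4) by simp_all
    from removed[OF assms(1,2) g(2) \<open>e \<noteq> f\<close> g(3)[symmetric] \<open>g \<noteq> e\<close>[symmetric] this \<open>v \<in> g\<close>]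
    show False using assms(8) g(1) by simp
  qed
  then have "w \<in> g" using g(4) assms(4) by blast
  then show ?thesis using g by blast
qed

lemma deg4: assumes "p \<in> line_edges E" shows "degree (reduced_L2_edges E) p = 4"
proof -
  obtain e f where ef: "p = {e,f}" "e \<in> E" "f \<in> E" "e \<noteq> f" "e \<inter> f \<noteq> {}"
    using assms unfolding line_edges_def by blast
  obtain v where v: "v \<in> e" "v \<in> f" using ef(5) by blast
  obtain u where u: "u \<noteq> v" "e = {v,u}" using edge_other[OF ef(2) v(1)] by metis
  obtain w where w: "w \<noteq> v" "f = {v,w}" using edge_other[OF ef(3) v(2)] by metis
  have "u \<noteq> w" using ef(4) u w by auto
  define Sw where "Sw = {g \<in> E. w \<in> g} - {f}"
  define Su where "Su = {h \<in> E. u \<in> h} - {e}"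
  have wV: "w \<in> V" "u \<in> V" using edge ef(2,3) u w by auto
  have cSw: "card Sw = 2" unfolding Sw_def
    using card_Diff_singleton[of f "{g \<in> E. w \<in> g}"] star3[OF wV(1)] ef(3) w by simp
  have cSu: "card Su = 2" unfolding Su_def
    using card_Diff_singleton[of e "{g \<in> E. u \<in> g}"] star3[OF wV(2)] ef(2) u by simp
  have finS: "finite Sw" "finite Su" unfolding Sw_def Su_def using star_fin wV by auto
  define F where "F = (\<lambda>g. {p,{f,g}})"
  define H where "H = (\<lambda>h. {p,{e,h}})"
  have injF: "inj_on F Sw"
  proof (rule inj_onI)
    fix g g' assume "g \<in> Sw" "g' \<in> Sw" "F g = F g'"
    then have "{f,g} = {f,g'}" unfolding F_def by (metis doubleton_eq_iff)
    then show "g = g'" by (metis doubleton_eq_iff)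
  qed
  have injH: "inj_on H Su"
  proof (rule inj_onI)
    fix g g' assume "g \<in> Su" "g' \<in> Su" "H g = H g'"
    then have "{e,g} = {e,g'}" unfolding H_def by (metis doubleton_eq_iff)
    then show "g = g'" by (metis doubleton_eq_iff)
  qed
  have disj: "F ` Sw \<inter> H ` Su = {}"
  proof (rule ccontr)
    assume "F ` Sw \<inter> H ` Su \<noteq> {}"
    then obtain g h where gh: "g \<in> Sw" "h \<in> Su" "F g = H h" by blast
    then have "{f,g} = {e,h}" unfolding F_def H_def by (metis doubleton_eq_iff)
    then have "g = e" using ef(4) by (metis doubleton_eq_iff)
    then have "w \<in> e" using gh(1) unfolding Sw_def by blast
    then show False using u w \<open>u \<noteq> w\<close> by auto
  qed
  have key: "{q \<in> reduced_L2_edges E. p \<in> q} = F ` Sw \<union> H ` Su"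
  proof (rule set_eqI, rule iffI)
    fix q assume "q \<in> {q \<in> reduced_L2_edges E. p \<in> q}"
    then have q: "q \<in> reduced_L2_edges E" "p \<in> q" by auto
    then have "q \<in> line_edges (line_edges E)" unfolding reduced_L2_edges_def by blast
    from q_form[OF this q(2)] obtain p' where p': "q = {p,p'}" "p' \<noteq> p" "p \<inter> p' \<noteq> {}" by blast
    then obtain k where k: "k \<in> p" "k \<in> p'" by blast
    have qR: "{{e,f},p'} \<in> reduced_L2_edges E" using q(1) p'(1) ef(1) by simp
    have qR': "{{f,e},p'} \<in> reduced_L2_edges E" using qR by (simp add: insert_commute)
    have ne: "p' \<noteq> {e,f}" "p' \<noteq> {f,e}" using p'(2) ef(1) by (auto simp: insert_commute)
    show "q \<in> F ` Sw \<union> H ` Su"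
    proof (cases "k = f")
      case True
      from nb[OF ef(2,3) u(2) w(2) u(1) w(1) \<open>u \<noteq> w\<close> qR] k(2) True ne(1)
      obtain g where "g \<in> E" "w \<in> g" "g \<noteq> f" "p' = {f,g}" by blast
      then have "g \<in> Sw" "q = F g" unfolding Sw_def F_def using p'(1) by auto
      then show ?thesis by blast
    next
      case False
      then have "k = e" using k(1) ef(1) by blast
      from nb[OF ef(3,2) w(2) u(2) w(1) u(1) \<open>u \<noteq> w\<close>[symmetric] qR'] k(2) \<open>k = e\<close> ne(2)
      obtain h where "h \<in> E" "u \<in> h" "h \<noteq> e" "p' = {e,h}" by blast
      then have "h \<in> Su" "q = H h" unfolding Su_def H_def using p'(1) by auto
      then show ?thesis by blast
    qed
  next
    fix q assume "q \<in> F ` Sw \<union> H ` Su"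
    then show "q \<in> {q \<in> reduced_L2_edges E. p \<in> q}"
    proof
      assume "q \<in> F ` Sw"
      then obtain g where g: "g \<in> E" "w \<in> g" "g \<noteq> f" "q = F g" unfolding Sw_def by blast
      have "v \<notin> g"
      proof
        assume "v \<in> g"
        then have "g = {v,w}" using edge_eq[OF g(1) _ g(2)] w(1) by metis
        then show False using g(3) w(2) by simp
      qed
      have "w \<notin> e" using u w \<open>u \<noteq> w\<close> by auto
      have d: "e \<inter> g = {}" using tf_disj[OF ef(2,3) g(1) v w(2)[THEN eqset_imp_iff, of w, simplified] g(2)]
        w(1) \<open>v \<notin> g\<close> \<open>w \<notin> e\<close> by (simp add: eq_commute)
      have "f \<inter> g \<noteq> {}" using g(2) w(2) by blast
      from in_R[OF ef(2,3) g(1) ef(4) g(3)[symmetric] ef(5) this d]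
      show ?thesis using g(4) ef(1) unfolding F_def by simp
    next
      assume "q \<in> H ` Su"
      then obtain h where h: "h \<in> E" "u \<in> h" "h \<noteq> e" "q = H h" unfolding Su_def by blast
      have "v \<notin> h"
      proof
        assume "v \<in> h"
        then have "h = {v,u}" using edge_eq[OF h(1) _ h(2)] u(1) by metis
        then show False using h(3) u(2) by simp
      qed
      have "u \<notin> f" using u w \<open>u \<noteq> w\<close> by auto
      have ue: "u \<in> e" using u(2) by simp
      have d: "h \<inter> f = {}" using tf_disj[OF h(1) ef(2,3) h(2) ue v(1) v(2)] u(1) \<open>v \<notin> h\<close> \<open>u \<notin> f\<close> by simp
      have "h \<inter> e \<noteq> {}" using h(2) ue by blast
      from in_R[OF h(1) ef(2,3) h(3) ef(4) this ef(5) d]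
      show ?thesis using h(4) ef(1) unfolding H_def by (simp add: insert_commute)
    qed
  qed
  have "degree (reduced_L2_edges E) p = card (F ` Sw \<union> H ` Su)"
    unfolding degree_def key ..
  also have "\<dots> = card (F ` Sw) + card (H ` Su)"
    using card_Un_disjoint[OF finite_imageI[OF finS(1)] finite_imageI[OF finS(2)] disj] .
  also have "\<dots> = 4" using card_image[OF injF] card_image[OF injH] cSw cSu by simp
  finally show ?thesis .
qed

definition C :: "'a \<Rightarrow> 'a set set set" where
  "C v = {{e,f} | e f. e \<in> E \<and> f \<in> E \<and> e \<noteq> f \<and> v \<in> e \<and> v \<in> f}"

lemma reachR: "{p,q} \<in> reduced_L2_edges E \<Longrightarrow> reachable (reduced_L2_edges E) p q"
  unfolding reachable_def adj_def by (rule r_into_rtranclp)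

lemma reachR': "{p,q} \<in> reduced_L2_edges E \<Longrightarrow> reachable (reduced_L2_edges E) q p"
  unfolding reachable_def adj_def by (rule r_into_rtranclp) (simp add: insert_commute)

lemma reach_trans: "reachable R a b \<Longrightarrow> reachable R b c \<Longrightarrow> reachable R a c"
  unfolding reachable_def by (rule rtranclp_trans)

lemma reach_refl: "reachable R a a"
  unfolding reachable_def by simp

lemma rot: assumes "e \<in> E" "f \<in> E" "g \<in> E" "e \<noteq> f" "f \<noteq> g" "e \<noteq> g" "v \<in> e" "v \<in> f" "v \<in> g"
  shows "reachable (reduced_L2_edges E) {e,f} {f,g}"
proof -
  obtain w where w: "w \<noteq> v" "f = {v,w}" using edge_other[OF assms(2,8)] by metis
  have wV: "w \<in> V" using edge[OF assms(2)] w by auto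
  obtain h where h: "h \<in> E" "w \<in> h" "h \<noteq> f" using star_other[OF wV] by blast
  have "v \<notin> h"
  proof
    assume "v \<in> h"
    then have "h = {v,w}" using edge_eq[OF h(1) _ h(2)] w(1) by metis
    then show False using h(3) w(2) by simp
  qed
  have "w \<notin> e"
  proof
    assume "w \<in> e"
    then have "e = {v,w}" using edge_eq[OF assms(1) assms(7)] w(1) by metis
    then show False using assms(4) w(2) by simp
  qed
  have "w \<notin> g"
  proof
    assume "w \<in> g"
    then have "g = {v,w}" using edge_eq[OF assms(3) assms(9)] w(1) by metis
    then show False using assms(5) w(2) by simp
  qed
  have wf: "w \<in> f" using w(2) by simp
  have d1: "e \<inter> h = {}" using tf_disj[OF assms(1,2) h(1) assms(7,8) wf h(2)] w(1) \<open>v \<notin> h\<close> \<open>w \<notin> e\<close> by simp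
  have d2: "g \<inter> h = {}" using tf_disj[OF assms(3,2) h(1) assms(9,8) wf h(2)] w(1) \<open>v \<notin> h\<close> \<open>w \<notin> g\<close> by simp
  have i1: "e \<inter> f \<noteq> {}" "f \<inter> h \<noteq> {}" "g \<inter> f \<noteq> {}" using assms(7,8,9) wf h(2) by blast+
  have r1: "{{e,f},{f,h}} \<in> reduced_L2_edges E"
    using in_R[OF assms(1,2) h(1) assms(4) h(3)[symmetric] i1(1,2) d1] .
  have r2: "{{g,f},{f,h}} \<in> reduced_L2_edges E"
    using in_R[OF assms(3,2) h(1) assms(5)[symmetric] h(3)[symmetric] i1(3,2) d2] .
  have "{g,f} = {f,g}" by (simp add: insert_commute)
  then show ?thesis using reach_trans[OF reachR[OF r1] reachR'[OF r2]] by simp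
qed

lemma classA: assumes "v \<in> V" "p \<in> C v" "p' \<in> C v"
  shows "reachable (reduced_L2_edges E) p p'"
proof -
  obtain a b where ab: "p = {a,b}" "a \<in> E" "b \<in> E" "a \<noteq> b" "v \<in> a" "v \<in> b"
    using assms(2) unfolding C_def by blast
  obtain c d where cd: "p' = {c,d}" "c \<in> E" "d \<in> E" "c \<noteq> d" "v \<in> c" "v \<in> d"
    using assms(3) unfolding C_def by blast
  show ?thesis
  proof (cases "c \<in> {a,b}")
    case c: True
    show ?thesis
    proof (cases "d \<in> {a,b}")
      case True
      then have "p' = p" using c cd(1,4) ab(1) by auto
      then show ?thesis using reach_refl by simp
    next
      case d: False
      show ?thesis
      proof (cases "c = a")
        case True
        have "reachable (reduced_L2_edges E) {b,a} {a,d}"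
          by (rule rot[OF ab(3,2) cd(3)]) (use ab cd d True in auto)
        then show ?thesis using ab(1) cd(1) True by (simp add: insert_commute)
      next
        case False
        then have "c = b" using c by blast
        have "reachable (reduced_L2_edges E) {a,b} {b,d}"
          by (rule rot[OF ab(2,3) cd(3)]) (use ab cd d \<open>c = b\<close> in auto)
        then show ?thesis using ab(1) cd(1) \<open>c = b\<close> by simp
      qed
    qed
  next
    case c: False
    show ?thesis
    proof (cases "d \<in> {a,b}")
      case False
      then have "c = d" using star_three[OF assms(1) ab(2,3) cd(2,3) ab(5,6) cd(5,6) ab(4) c] by blast
      then show ?thesis using cd(4) by simp
    next
      case True
      show ?thesis
      proof (cases "d = a")
        case True
        have "reachable (reduced_L2_edges E) {b,a} {a,c}"
          by (rule rot[OF ab(3,2) cd(2)]) (use ab cd c True in auto)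
        then show ?thesis using ab(1) cd(1) True by (simp add: insert_commute)
      next
        case False
        then have "d = b" using \<open>d \<in> {a,b}\<close> by blast
        have "reachable (reduced_L2_edges E) {a,b} {b,c}"
          by (rule rot[OF ab(2,3) cd(2)]) (use ab cd c \<open>d = b\<close> in auto)
        then show ?thesis using ab(1) cd(1) \<open>d = b\<close> by (simp add: insert_commute)
      qed
    qed
  qed
qed

lemma classB: assumes "{v,w} \<in> E"
  shows "\<exists>p\<in>C v. \<exists>p'\<in>C w. reachable (reduced_L2_edges E) p p'"
proof -
  define f where "f = {v,w}"
  have fE: "f \<in> E" using assms f_def by simp
  have "v \<noteq> w" using edge[OF assms] by auto
  have vV: "v \<in> V" "w \<in> V" using edge[OF assms] by auto
  obtain e where e: "e \<in> E" "v \<in> e" "e \<noteq> f" using star_other[OF vV(1)] by blast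
  obtain h where h: "h \<in> E" "w \<in> h" "h \<noteq> f" using star_other[OF vV(2)] by blast
  have "v \<notin> h"
  proof
    assume "v \<in> h"
    then have "h = {v,w}" using edge_eq[OF h(1) _ h(2)] \<open>v \<noteq> w\<close> by metis
    then show False using h(3) f_def by simp
  qed
  have "w \<notin> e"
  proof
    assume "w \<in> e"
    then have "e = {v,w}" using edge_eq[OF e(1) e(2)] \<open>v \<noteq> w\<close> by metis
    then show False using e(3) f_def by simp
  qed
  have vf: "v \<in> f" "w \<in> f" using f_def by simp_all
  have d: "e \<inter> h = {}" using tf_disj[OF e(1) fE h(1) e(2) vf h(2)] \<open>v \<noteq> w\<close> \<open>v \<notin> h\<close> \<open>w \<notin> e\<close> by simp
  have i: "e \<inter> f \<noteq> {}" "f \<inter> h \<noteq> {}" using e(2) vf h(2) by blast+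
  have r: "{{e,f},{f,h}} \<in> reduced_L2_edges E" using in_R[OF e(1) fE h(1) e(3) h(3)[symmetric] i d] .
  have "{e,f} \<in> C v" unfolding C_def using e fE vf by blast
  moreover have "{f,h} \<in> C w" unfolding C_def using h fE vf by blast
  ultimately show ?thesis using reachR[OF r] by blast
qed

lemma cover: "p \<in> line_edges E \<Longrightarrow> \<exists>v\<in>V. p \<in> C v"
proof -
  assume "p \<in> line_edges E"
  then obtain e f where ef: "p = {e,f}" "e \<in> E" "f \<in> E" "e \<noteq> f" "e \<inter> f \<noteq> {}"
    unfolding line_edges_def by blast
  then obtain v where "v \<in> e" "v \<in> f" by blast
  then have "v \<in> V" "p \<in> C v" using edge[OF ef(2)] ef unfolding C_def by blast+
  then show ?thesis by blast
qed

lemma main_conn: assumes "(adj E)\<^sup>*\<^sup>* v w" "v \<in> V"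
  shows "\<forall>p\<in>C v. \<forall>p'\<in>C w. reachable (reduced_L2_edges E) p p'"
  using assms(1)
proof (induction rule: rtranclp_induct)
  case base
  then show ?case using classA[OF assms(2)] by blast
next
  case (step y z)
  then have yz: "{y,z} \<in> E" unfolding adj_def by simp
  then have zV: "z \<in> V" using edge by auto
  obtain q q' where q: "q \<in> C y" "q' \<in> C z" "reachable (reduced_L2_edges E) q q'"
    using classB[OF yz] by blast
  show ?case
  proof (intro ballI)
    fix p p'' assume "p \<in> C v" "p'' \<in> C z"
    then show "reachable (reduced_L2_edges E) p p''"
      using step.IH q classA[OF zV q(2)] reach_trans by metis
  qed
qed

end

theorem proposition2p1:
  fixes V :: "'a set" and E :: "'a set set"
  assumes "simple_graph V E"
    and "connected_graph V E"
    and "bridgeless V E"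
    and "triangle_free E"
    and "regular 3 V E"
  shows "regular 4 (reduced_L2_vertices E) (reduced_L2_edges E)
       \<and> connected_graph (reduced_L2_vertices E) (reduced_L2_edges E)"
proof -
  interpret tfc V E by (rule tfc.intro) (use assms in auto)
  have R: "regular 4 (reduced_L2_vertices E) (reduced_L2_edges E)"
    unfolding regular_def reduced_L2_vertices_def using deg4 by blast
  obtain v where v: "v \<in> V" using assms(2) unfolding connected_graph_def by blast
  obtain a where a: "a \<in> E" "v \<in> a" using star_other[OF v] by blast
  obtain b where b: "b \<in> E" "v \<in> b" "b \<noteq> a" using star_other[OF v] by blast
  have "a \<inter> b \<noteq> {}" using a b by blast
  then have "{a,b} \<in> line_edges E" using le_intro[OF a(1) b(1) b(3)[symmetric]] by blast
  then have ne: "reduced_L2_vertices E \<noteq> {}" unfolding reduced_L2_vertices_def by blast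
  have "reachable (reduced_L2_edges E) p p'"
    if pl: "p \<in> line_edges E" "p' \<in> line_edges E" for p p'
  proof -
    obtain x where x: "x \<in> V" "p \<in> C x" using cover[OF pl(1)] by blast
    obtain y where y: "y \<in> V" "p' \<in> C y" using cover[OF pl(2)] by blast
    have "(adj E)\<^sup>*\<^sup>* x y" using assms(2) x(1) y(1) unfolding connected_graph_def reachable_def by blast
    from main_conn[OF this x(1)] x(2) y(2) show ?thesis by blast
  qed
  then have "connected_graph (reduced_L2_vertices E) (reduced_L2_edges E)"
    unfolding connected_graph_def reduced_L2_vertices_def using ne reduced_L2_vertices_def by blast
  with R show ?thesis by blast
qed

end
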